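(* For every $n\ge3$ with $n\neq4$, the unidirectional cycle $\overrightarrow{C_n}$ is $\{0,2\}$-antimagic.
   Context: An oriented graph is a simple graph each of whose edges is given one direction. For vertices $u,v$, $d(u,v)$ is the length of a shortest directed path from $u$ to $v$ ($d(u,u)=0$). For a set $D$ of nonnegative integers, $N_D(v)=\{y : d(v,y)\in D\}$; for a bijection $f:V\to\{1,\dots,|V|\}$, $\omega_D(v)=\sum_{x\in N_D(v)}f(x)$ (empty sum $0$); $f$ is $D$-antimagic if distinct vertices have distinct $D$-weights, and the graph is $D$-antimagic if such an $f$ exists. The unidirectional cycle $\overrightarrow{C_n}$ ($n\ge3$) has vertices $v_1,\dots,v_n$ and arcs $(v_i,v_{i+1})$ for $1\le i\le n-1$ and $(v_n,v_1)$; $d(v_i,v_j)=(j-i)\bmod n$. *)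

theory Defs
  imports Main
begin

(* d(u,v) = k : there is a directed walk of length k from u to v and none shorter.
   (A shortest directed walk is a path; unreachable pairs have no distance.) *)
definition has_dist :: "('a \<times> 'a) set \<Rightarrow> 'a \<Rightarrow> 'a \<Rightarrow> nat \<Rightarrow> bool" where
  "has_dist A u v k \<longleftrightarrow> (u, v) \<in> A ^^ k \<and> (\<forall>j<k. (u, v) \<notin> A ^^ j)"

definition dist_nbhd :: "'a set \<Rightarrow> ('a \<times> 'a) set \<Rightarrow> nat set \<Rightarrow> 'a \<Rightarrow> 'a set" where
  "dist_nbhd V A D v = {y \<in> V. \<exists>k\<in>D. has_dist A v y k}"

definition D_weight :: "'a set \<Rightarrow> ('a \<times> 'a) set \<Rightarrow> nat set \<Rightarrow> ('a \<Rightarrow> nat) \<Rightarrow> 'a \<Rightarrow> nat" where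
  "D_weight V A D f v = (\<Sum>x\<in>dist_nbhd V A D v. f x)"

definition D_antimagic_labeling :: "'a set \<Rightarrow> ('a \<times> 'a) set \<Rightarrow> nat set \<Rightarrow> ('a \<Rightarrow> nat) \<Rightarrow> bool" where
  "D_antimagic_labeling V A D f \<longleftrightarrow>
     bij_betw f V {1..card V} \<and> inj_on (D_weight V A D f) V"

definition D_antimagic :: "'a set \<Rightarrow> ('a \<times> 'a) set \<Rightarrow> nat set \<Rightarrow> bool" where
  "D_antimagic V A D \<longleftrightarrow> (\<exists>f. D_antimagic_labeling V A D f)"

(* Unidirectional cycle on n vertices: vertex v_i is represented by i-1 \<in> {0..<n},
   arcs (i, (i+1) mod n). *)
definition ucycle_V :: "nat \<Rightarrow> nat set" where
  "ucycle_V n = {0..<n}"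

definition ucycle_A :: "nat \<Rightarrow> (nat \<times> nat) set" where
  "ucycle_A n = {(i, (i + 1) mod n) | i. i < n}"

end

theory Submission
  imports Defs
begin

lemma relpow_uc:
  assumes "k \<ge> 1"
  shows "(i, j) \<in> ucycle_A n ^^ k \<longleftrightarrow> i < n \<and> j = (i + k) mod n"
  using assms
proof (induction k arbitrary: j)
  case 0 then show ?case by simp
next
  case (Suc k)
  show ?case
  proof (cases "k = 0")
    case True then show ?thesis by (auto simp: ucycle_A_def)
  next
    case False
    then have IH: "\<And>j. (i, j) \<in> ucycle_A n ^^ k \<longleftrightarrow> i < n \<and> j = (i + k) mod n"
      using Suc.IH by simp
    have "(i, j) \<in> ucycle_A n ^^ Suc k \<longleftrightarrow> (\<exists>y. (i,y) \<in> ucycle_A n ^^ k \<and> (y,j) \<in> ucycle_A n)"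
      by (simp add: relcomp_unfold)
    also have "\<dots> \<longleftrightarrow> i < n \<and> j = (i + Suc k) mod n"
      using IH by (auto simp: ucycle_A_def mod_Suc_eq)
    finally show ?thesis .
  qed
qed

lemma nbhd_uc:
  assumes "n \<ge> 3" "i < n"
  shows "dist_nbhd (ucycle_V n) (ucycle_A n) {0,2} i = {i, (i+2) mod n}"
proof -
  have ne1: "(i+2) mod n \<noteq> i" and ne2: "(i+2) mod n \<noteq> (i+1) mod n"
    using assms by (cases "i + 2 < n"; cases "i+1 < n"; auto simp: mod_if)+
  have h0: "has_dist (ucycle_A n) i y 0 \<longleftrightarrow> y = i" for y
    by (auto simp: has_dist_def)
  have h2: "has_dist (ucycle_A n) i y 2 \<longleftrightarrow> y = (i+2) mod n" for y
  proof -
    have e: "{j::nat. j < 2} = {0, 1}" by auto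
    have "(\<forall>j<2. (i, y) \<notin> ucycle_A n ^^ j) \<longleftrightarrow> (\<forall>j\<in>{j::nat. j<2}. (i, y) \<notin> ucycle_A n ^^ j)"
      by auto
    also have "\<dots> \<longleftrightarrow> y \<noteq> i \<and> (i,y) \<notin> ucycle_A n ^^ 1"
      unfolding e by (auto simp: relpow.simps(1))
    finally have "(\<forall>j<2. (i, y) \<notin> ucycle_A n ^^ j) \<longleftrightarrow> y \<noteq> i \<and> (i,y) \<notin> ucycle_A n ^^ 1" .
    then show ?thesis unfolding has_dist_def
      using relpow_uc[of 2 i y n] relpow_uc[of 1 i y n] assms ne1 ne2
      by (auto simp del: relpow.simps)
  qed
  show ?thesis
    unfolding dist_nbhd_def ucycle_V_def using h0 h2 assms by auto
qed

lemma weight_uc: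
  assumes "n \<ge> 3" "i < n"
  shows "D_weight (ucycle_V n) (ucycle_A n) {0,2} f i = f i + f ((i+2) mod n)"
proof -
  have ne1: "(i+2) mod n \<noteq> i"
    using assms by (cases "i + 2 < n"; auto simp: mod_if)
  show ?thesis unfolding D_weight_def nbhd_uc[OF assms] using ne1 by simp
qed

lemma bij_from_inj:
  "inj_on f A \<Longrightarrow> f ` A \<subseteq> B \<Longrightarrow> finite B \<Longrightarrow> card A = card B \<Longrightarrow> bij_betw f A B"
  by (simp add: bij_betw_def card_image card_subset_eq)

lemma core_odd:
  fixes m :: nat
  assumes "m \<ge> 3" "odd m"
  shows "\<exists>b. bij_betw b {0..<m} {1..m} \<and> inj_on (\<lambda>p. b p + b ((p+1) mod m)) {0..<m}"
proof -
  have "bij_betw (\<lambda>p. p + 1) {0..<m} {1..m}"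
    apply (rule bij_from_inj) by (auto simp: inj_on_def)
  moreover have "inj_on (\<lambda>p. (p+1) + ((p+1) mod m + 1)) {0..<m}"
  proof (rule inj_onI)
    fix p q assume "p \<in> {0..<m}" "q \<in> {0..<m}" "(p+1) + ((p+1) mod m + 1) = (q+1) + ((q+1) mod m + 1)"
    moreover have "(p+1) + ((p+1) mod m + 1) = (if p+1 < m then 2*p+3 else m+1)" if "p < m" for p
      using that by (auto simp: mod_if)
    ultimately have e: "(if p+1 < m then 2*p+3 else m+1) = (if q+1 < m then 2*q+3 else m+1)"
      by (metis atLeastLessThan_iff)
    show "p = q"
    proof (cases "p+1 < m"; cases "q+1<m")
      assume "p+1<m" "q+1<m" then show ?thesis using e by simp
    next
      assume "\<not> p+1<m" "\<not> q+1<m" then show ?thesis using \<open>p \<in> {0..<m}\<close> \<open>q \<in> {0..<m}\<close> by simp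
    next
      assume "p+1<m" "\<not> q+1<m" then have "2*p+3 = m+1" using e by simp
      then show ?thesis using assms(2) by presburger
    next
      assume "\<not> p+1<m" "q+1<m" then have "2*q+3 = m+1" using e by simp
      then show ?thesis using assms(2) by presburger
    qed
  qed
  ultimately show ?thesis by blast
qed

lemma core_even:
  fixes m :: nat
  assumes "m \<ge> 3" "even m"
  shows "\<exists>b. bij_betw b {0..<m} {1..m} \<and> inj_on (\<lambda>p. b p + b ((p+1) mod m)) {0..<m}"
proof -
  define b where "b p = (if p + 2 = m then m else if p + 1 = m then p+1-1 else p+1)" for p
  have m4: "m \<ge> 4" using assms by presburger
  have "bij_betw b {0..<m} {1..m}"
    
  proof (rule bij_from_inj)
    show "inj_on b {0..<m}"
    proof (rule inj_onI)
      fix p q assume "p \<in> {0..<m}" "q \<in> {0..<m}" "b p = b q"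
      then show "p = q" unfolding b_def using m4 by (simp split: if_splits)
    qed
    show "b ` {0..<m} \<subseteq> {1..m}" unfolding b_def using m4 by auto
  qed auto
  moreover have "inj_on (\<lambda>p. b p + b ((p+1) mod m)) {0..<m}"
  proof (rule inj_onI)
    fix p q assume "p \<in> {0..<m}" "q \<in> {0..<m}" "b p + b ((p+1) mod m) = b q + b ((q+1) mod m)"
    moreover have "b p + b ((p+1) mod m) = (if p+3 < m then 2*p+3 else if p+3 = m then 2*m-2
        else if p + 2 = m then 2*m-1 else m)" if "p < m" for p
      using that m4 by (auto simp: mod_if b_def)
    ultimately have "(if p+3 < m then 2*p+3 else if p+3 = m then 2*m-2
        else if p + 2 = m then 2*m-1 else m) = (if q+3 < m then 2*q+3 else if q+3 = m then 2*m-2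
        else if q + 2 = m then 2*m-1 else m)"
      by auto
    then show "p = q" using assms m4 \<open>p \<in> {0..<m}\<close> \<open>q \<in> {0..<m}\<close>
      by (auto split: if_splits; presburger)
  qed
  ultimately show ?thesis by blast
qed

lemma core:
  fixes m :: nat
  assumes "m \<ge> 3"
  shows "\<exists>b. bij_betw b {0..<m} {1..m} \<and> inj_on (\<lambda>p. b p + b ((p+1) mod m)) {0..<m}"
  using core_odd core_even assms by blast

lemma transfer:
  fixes n :: nat and pos b s :: "nat \<Rightarrow> nat"
  assumes n3: "n \<ge> 3" and bp: "bij_betw pos {0..<n} {0..<n}" and bb: "bij_betw b {0..<n} {1..n}"
    and step: "\<And>i. i < n \<Longrightarrow> pos ((i+2) mod n) = s (pos i)"
    and inj: "inj_on (\<lambda>q. b q + b (s q)) {0..<n}"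
  shows "D_antimagic (ucycle_V n) (ucycle_A n) {0, 2}"
proof -
  let ?f = "b \<circ> pos"
  have "bij_betw ?f {0..<n} {1..n}" using bij_betw_trans[OF bp bb] .
  then have b1: "bij_betw ?f (ucycle_V n) {1..card (ucycle_V n)}"
    by (simp add: ucycle_V_def)
  have w: "D_weight (ucycle_V n) (ucycle_A n) {0,2} ?f i = (\<lambda>q. b q + b (s q)) (pos i)"
    if "i \<in> ucycle_V n" for i
    using that weight_uc[OF n3, of i ?f] step[of i] by (simp add: ucycle_V_def)
  have "inj_on ((\<lambda>q. b q + b (s q)) \<circ> pos) (ucycle_V n)"
    unfolding ucycle_V_def
    using comp_inj_on[of pos "{0..<n}" "\<lambda>q. b q + b (s q)"] bp inj
    by (simp add: bij_betw_def)
  then have "inj_on (D_weight (ucycle_V n) (ucycle_A n) {0,2} ?f) (ucycle_V n)"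
    using inj_on_cong[of "ucycle_V n" "D_weight (ucycle_V n) (ucycle_A n) {0,2} ?f"
        "(\<lambda>q. b q + b (s q)) \<circ> pos"] w by simp
  then show ?thesis
    unfolding D_antimagic_def D_antimagic_labeling_def using b1 by blast
qed

lemma odd_case:
  fixes n :: nat
  assumes "n \<ge> 3" "odd n"
  shows "D_antimagic (ucycle_V n) (ucycle_A n) {0, 2}"
proof -
  obtain b where bb: "bij_betw b {0..<n} {1..n}" and ib: "inj_on (\<lambda>p. b p + b ((p+1) mod n)) {0..<n}"
    using core[OF assms(1)] by blast
  define pos where "pos i = (if even i then i div 2 else (i+n) div 2)" for i :: nat
  have bp: "bij_betw pos {0..<n} {0..<n}"
  proof (rule bij_from_inj)
    show "inj_on pos {0..<n}"
    proof (rule inj_onI)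
      fix p q assume "p \<in> {0..<n}" "q \<in> {0..<n}" "pos p = pos q"
      then show "p = q" unfolding pos_def using assms(2)
        by (cases "even p"; cases "even q"; auto elim!: evenE oddE)
    qed
    show "pos ` {0..<n} \<subseteq> {0..<n}" unfolding pos_def by auto
  qed auto
  have step: "pos ((i+2) mod n) = (pos i + 1) mod n" if "i < n" for i
  proof (cases "i + 2 < n")
    case True
    then show ?thesis unfolding pos_def using assms(2)
      by (cases "even i"; auto elim!: evenE oddE)
  next
    case False
    then have "i = n - 1 \<or> i = n - 2" using that by auto
    then show ?thesis
    proof
      assume h: "i = n - 1"
      then have "(i+2) mod n = 1" using assms by (simp add: mod_if)
      moreover have "even i" using h assms by simp
      ultimately show ?thesis using h assms unfolding pos_def by (auto elim!: oddE)
    next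
      assume h: "i = n - 2"
      then have "i + 2 = n" using assms by simp
      then have "(i+2) mod n = 0" by simp
      moreover have "odd i" using h assms by (auto elim!: oddE)
      ultimately show ?thesis using h assms unfolding pos_def by (auto elim!: oddE)
    qed
  qed
  show ?thesis by (rule transfer[OF assms(1) bp bb step ib])
qed

lemma even_case:
  fixes n m :: nat
  assumes m3: "m \<ge> 3" and nm: "n = 2 * m"
  shows "D_antimagic (ucycle_V n) (ucycle_A n) {0, 2}"
proof -
  obtain b where bb: "bij_betw b {0..<m} {1..m}" and ib: "inj_on (\<lambda>p. b p + b ((p+1) mod m)) {0..<m}"
    using core[OF m3] by blast
  define gb where "gb p = b p + b ((p+1) mod m)" for p
  have gbr: "2 \<le> gb p \<and> gb p \<le> 2*m - 1" if "p < m" for p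
  proof -
    have pm: "(p+1) mod m < m" "(p+1) mod m \<noteq> p" using m3 that by (auto simp: mod_if)
    have "b p \<in> {1..m}" "b ((p+1) mod m) \<in> {1..m}"
      using bb that pm by (auto simp: bij_betw_def)
    moreover have "b p \<noteq> b ((p+1) mod m)"
      using bb that pm by (auto simp: bij_betw_def inj_on_def)
    ultimately show ?thesis unfolding gb_def by auto
  qed
  define B where "B q = (if q < m then b q else m + b (q - m))" for q
  define s where "s q = (if q < m then (q+1) mod m else m + (q - m + 1) mod m)" for q
  define pos where "pos i = (if even i then i div 2 else m + i div 2)" for i :: nat
  have n3: "n \<ge> 3" using nm m3 by simp
  have bB: "bij_betw B {0..<n} {1..n}"
  proof (rule bij_from_inj)
    show "inj_on B {0..<n}"
    proof (rule inj_onI)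
      fix p q assume a: "p \<in> {0..<n}" "q \<in> {0..<n}" "B p = B q"
      have r: "x < m \<Longrightarrow> b x \<in> {1..m}" for x using bb by (auto simp: bij_betw_def)
      have ij: "x < m \<Longrightarrow> y < m \<Longrightarrow> b x = b y \<Longrightarrow> x = y" for x y
        using bb by (auto simp: bij_betw_def inj_on_def)
      show "p = q"
      proof (cases "p < m"; cases "q < m")
        assume "p < m" "q < m" then show ?thesis using a ij unfolding B_def by simp
      next
        assume h: "p < m" "\<not> q < m"
        moreover have "q - m < m" using h a nm by auto
        ultimately have "B p \<le> m" "B q > m" using r[of p] r[of "q-m"] unfolding B_def by auto
        then show ?thesis using a by simp
      next
        assume h: "\<not> p < m" "q < m"
        moreover have "p - m < m" using h a nm by auto
        ultimately have "B q \<le> m" "B p > m" using r[of q] r[of "p-m"] unfolding B_def by auto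
        then show ?thesis using a by simp
      next
        assume h: "\<not> p < m" "\<not> q < m"
        then have "b (p - m) = b (q - m)" using a unfolding B_def by simp
        then have "p - m = q - m" using ij[of "p-m" "q-m"] a nm by auto
        then show ?thesis using h by simp
      qed
    qed
    show "B ` {0..<n} \<subseteq> {1..n}"
    proof
      fix y assume "y \<in> B ` {0..<n}"
      then obtain q where q: "q < n" "y = B q" by auto
      show "y \<in> {1..n}"
      proof (cases "q < m")
        case True
        then have "b q \<in> {1..m}" using bb by (auto simp: bij_betw_def)
        then show ?thesis using q True nm unfolding B_def by auto
      next
        case False then have "q - m < m" using q nm by simp
        then have "b (q - m) \<in> {1..m}" using bb by (auto simp: bij_betw_def)
        then show ?thesis using q False nm unfolding B_def by auto
      qed
    qed
  qed auto
  have bp: "bij_betw pos {0..<n} {0..<n}"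
  proof (rule bij_from_inj)
    show "inj_on pos {0..<n}"
    proof (rule inj_onI)
      fix p q assume "p \<in> {0..<n}" "q \<in> {0..<n}" "pos p = pos q"
      then show "p = q" unfolding pos_def using nm
        by (cases "even p"; cases "even q"; auto elim!: evenE oddE)
    qed
    show "pos ` {0..<n} \<subseteq> {0..<n}" unfolding pos_def using nm by auto
  qed auto
  have step: "pos ((i+2) mod n) = s (pos i)" if "i < n" for i
  proof (cases "i + 2 < n")
    case True
    then show ?thesis unfolding pos_def s_def using nm
      by (cases "even i"; auto elim!: evenE oddE simp: mod_if)
  next
    case False
    then have "i = n - 1 \<or> i = n - 2" using that by auto
    then show ?thesis
    proof
      assume h: "i = n - 1"
      then have "i + 2 = n + 1" using n3 by simp
      then have "(i+2) mod n = 1" using n3 by (simp add: mod_if)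
      moreover have "i = 2 * (m - 1) + 1" using h nm m3 by simp
      ultimately show ?thesis unfolding pos_def s_def using m3 by simp
    next
      assume h: "i = n - 2"
      then have "i + 2 = n" using n3 by simp
      then have "(i+2) mod n = 0" by simp
      moreover have "i = 2 * (m - 1)" using h nm m3 by simp
      ultimately show ?thesis unfolding pos_def s_def using m3 by simp
    qed
  qed
  have g: "B q + B (s q) = (if q < m then gb q else 2*m + gb (q - m))" if "q < n" for q
  proof (cases "q < m")
    case True
    then show ?thesis unfolding B_def s_def gb_def using m3 by simp
  next
    case False
    then have "q - m + 1 = Suc (q - m)" by simp
    have "(q - m + 1) mod m < m" using m3 by simp
    then show ?thesis unfolding B_def s_def gb_def using False by simp
  qed
  have ig: "inj_on (\<lambda>q. B q + B (s q)) {0..<n}"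
  proof (rule inj_onI)
    fix p q assume a: "p \<in> {0..<n}" "q \<in> {0..<n}" "B p + B (s p) = B q + B (s q)"
    then have e: "(if p < m then gb p else 2*m + gb (p - m)) = (if q < m then gb q else 2*m + gb (q - m))"
      using g by auto
    have igb: "x < m \<Longrightarrow> y < m \<Longrightarrow> gb x = gb y \<Longrightarrow> x = y" for x y
      using ib unfolding gb_def inj_on_def by auto
    show "p = q"
    proof (cases "p < m"; cases "q < m")
      assume "p < m" "q < m" then show ?thesis using e igb by simp
    next
      assume h: "p < m" "\<not> q < m"
      then show ?thesis using e gbr[of p] gbr[of "q-m"] a nm by auto
    next
      assume h: "\<not> p < m" "q < m"
      then show ?thesis using e gbr[of q] gbr[of "p-m"] a nm by auto
    next
      assume h: "\<not> p < m" "\<not> q < m"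
      then have "gb (p - m) = gb (q - m)" using e by simp
      then have "p - m = q - m" using igb[of "p-m" "q-m"] a nm by auto
      then show ?thesis using h by simp
    qed
  qed
  show ?thesis by (rule transfer[OF n3 bp bB step ig])
qed

theorem mainTheorem12:
  fixes n :: nat
  assumes "n \<ge> 3" and "n \<noteq> 4"
  shows "D_antimagic (ucycle_V n) (ucycle_A n) {0, 2}"
proof (cases "odd n")
  case True then show ?thesis using odd_case assms by blast
next
  case False
  then obtain m where nm: "n = 2 * m" by blast
  then have "m \<ge> 3" using assms by auto
  then show ?thesis using even_case nm by blast
qed

end
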